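(* Assume in addition that $\mu\ll\mathrm{Leb}$ with continuous density $\psi=d\mu/d\mathrm{Leb}$, let $\alpha_0=\beta_0/\mathrm{Leb}(M)$, and assume $(\mathfrak c+1)\beta_0<1$. Then for every $\epsilon>0$ there is a constant $c=c(\epsilon)>0$ such that for every $\underline\omega\in\mathcal G$ there exist points $\hat p_-\in\{\psi\ge\alpha_0\}$, $\hat p\in M$ and a sequence $n_i\to\infty$ with $$\mu^n_{\underline\omega}\Big(M^n_{\underline\omega}\cap\mathcal B(\hat p,\epsilon)\cap f^n_{\theta^{-n}\underline\omega}\mathcal B(\hat p_-,\epsilon)\Big)\ge c\qquad\text{for all } n=n_i.$$
   Context: $\Omega$ Polish with Borel probability $P$, $M$ compact Riemannian manifold with volume $\mathrm{Leb}$ and distance $d$, $\mathcal B(x,r)=\{y:d(x,y)<r\}$; $\omega\mapsto f_\omega\in\mathrm{Diff}^2(M)$ measurable; $\mathbb P=P^{\mathbb Z}$, $\theta$ the left shift, $\tau(x,\underline\omega)=(f_{\omega_1}x,\theta\underline\omega)$, $f^n_{\underline\omega}=f_{\omega_n}\circ\cdots\circ f_{\omega_1}$, $f^{-n}_{\underline\omega}=f^{-1}_{\omega_{-n+1}}\circ\cdots\circ f^{-1}_{\omega_0}$ ($n\ge1$), $\underline\omega^+=(\omega_k)_{k>0}$. $\mu$ is a stationary measure and $\mu^*$ the unique $\tau$-invariant probability projecting to $\mu\times P^{\mathbb Z^+}$. $\mu^n_{\underline\omega}=(f^n_{\theta^{-n}\underline\omega})_*\mu$. Fix $\beta_0>0$,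 $\mathfrak c>1$, a compact $\Theta_0\subset M\times\Omega^{\mathbb Z}$ with $\mu^*(\Theta_n)\ge1-\beta_0$ for all $n$, where $\Theta_n=\Theta_0\cap\tau^{-n}\Theta_0$; $\Theta_n^+$ is its image under $(x,\underline\omega)\mapsto(x,\underline\omega^+)$; $M^n_{\underline\omega}=\{x:(f^{-n}_{\underline\omega}x,(\theta^{-n}\underline\omega)^+)\in\Theta_n^+\}$; $\mathcal G^{(n)}=\{\underline\omega:\mu^n_{\underline\omega}(M^n_{\underline\omega})\ge1-\mathfrak c\beta_0\}$ and $\mathcal G=\bigcap_{N\ge1}\bigcup_{n\ge N}\mathcal G^{(n)}$. *)

theory Defs
  imports "HOL-Probability.Probability"
begin

text \<open>Random dynamical system conventions.  Sequences in Omega^Z are maps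
  int => 'w (product topology from Function_Topology); f w is the map f_omega.\<close>

definition shift :: "(int \<Rightarrow> 'w) \<Rightarrow> (int \<Rightarrow> 'w)" where
  "shift \<omega> = (\<lambda>k. \<omega> (k + 1))"

definition shift_inv :: "nat \<Rightarrow> (int \<Rightarrow> 'w) \<Rightarrow> (int \<Rightarrow> 'w)" where
  "shift_inv n \<omega> = (\<lambda>k. \<omega> (k - int n))"

text \<open>omega^+ = (omega_k)_{k>0}, indexed by nat: entry j is omega_{j+1}\<close>
definition plus_part :: "(int \<Rightarrow> 'w) \<Rightarrow> (nat \<Rightarrow> 'w)" where
  "plus_part \<omega> = (\<lambda>j. \<omega> (int j + 1))"

fun fiter :: "('w \<Rightarrow> 'm \<Rightarrow> 'm) \<Rightarrow> nat \<Rightarrow> (int \<Rightarrow> 'w) \<Rightarrow> 'm \<Rightarrow> 'm" where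
  "fiter f 0 \<omega> = id"
| "fiter f (Suc n) \<omega> = f (\<omega> (int (Suc n))) \<circ> fiter f n \<omega>"

fun fiter_inv :: "('w \<Rightarrow> 'm \<Rightarrow> 'm) \<Rightarrow> nat \<Rightarrow> (int \<Rightarrow> 'w) \<Rightarrow> 'm \<Rightarrow> 'm" where
  "fiter_inv f 0 \<omega> = id"
| "fiter_inv f (Suc n) \<omega> = inv (f (\<omega> (- int n))) \<circ> fiter_inv f n \<omega>"

definition skew :: "('w \<Rightarrow> 'm \<Rightarrow> 'm) \<Rightarrow> 'm \<times> (int \<Rightarrow> 'w) \<Rightarrow> 'm \<times> (int \<Rightarrow> 'w)" where
  "skew f p = (f (snd p 1) (fst p), shift (snd p))"

definition proj_plus :: "'m \<times> (int \<Rightarrow> 'w) \<Rightarrow> 'm \<times> (nat \<Rightarrow> 'w)" where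
  "proj_plus p = (fst p, plus_part (snd p))"

definition Theta :: "('w \<Rightarrow> 'm \<Rightarrow> 'm) \<Rightarrow> ('m \<times> (int \<Rightarrow> 'w)) set \<Rightarrow> nat
    \<Rightarrow> ('m \<times> (int \<Rightarrow> 'w)) set" where
  "Theta f Theta0 n = Theta0 \<inter> (skew f ^^ n) -` Theta0"

definition Theta_plus :: "('w \<Rightarrow> 'm \<Rightarrow> 'm) \<Rightarrow> ('m \<times> (int \<Rightarrow> 'w)) set \<Rightarrow> nat
    \<Rightarrow> ('m \<times> (nat \<Rightarrow> 'w)) set" where
  "Theta_plus f Theta0 n = proj_plus ` Theta f Theta0 n"

definition Mset :: "('w \<Rightarrow> 'm \<Rightarrow> 'm) \<Rightarrow> ('m \<times> (int \<Rightarrow> 'w)) set \<Rightarrow> nat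
    \<Rightarrow> (int \<Rightarrow> 'w) \<Rightarrow> 'm set" where
  "Mset f Theta0 n \<omega> =
     {x. (fiter_inv f n \<omega> x, plus_part (shift_inv n \<omega>)) \<in> Theta_plus f Theta0 n}"

definition mu_n :: "('w \<Rightarrow> 'm \<Rightarrow> 'm) \<Rightarrow> 'm measure \<Rightarrow> nat \<Rightarrow> (int \<Rightarrow> 'w) \<Rightarrow> 'm measure" where
  "mu_n f \<mu> n \<omega> = distr \<mu> \<mu> (fiter f n (shift_inv n \<omega>))"

definition Gn :: "('w \<Rightarrow> 'm \<Rightarrow> 'm) \<Rightarrow> 'm measure \<Rightarrow> ('m \<times> (int \<Rightarrow> 'w)) set
    \<Rightarrow> real \<Rightarrow> real \<Rightarrow> nat \<Rightarrow> (int \<Rightarrow> 'w) set" where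
  "Gn f \<mu> Theta0 cc \<beta>0 n =
     {\<omega>. measure (mu_n f \<mu> n \<omega>) (Mset f Theta0 n \<omega>) \<ge> 1 - cc * \<beta>0}"

definition Gset :: "('w \<Rightarrow> 'm \<Rightarrow> 'm) \<Rightarrow> 'm measure \<Rightarrow> ('m \<times> (int \<Rightarrow> 'w)) set
    \<Rightarrow> real \<Rightarrow> real \<Rightarrow> (int \<Rightarrow> 'w) set" where
  "Gset f \<mu> Theta0 cc \<beta>0 = (\<Inter>N\<in>{1..}. \<Union>n\<in>{N..}. Gn f \<mu> Theta0 cc \<beta>0 n)"

end

theory Submission
  imports Defs
begin

lemma fiter_homeo:
  assumes "\<And>w. homeomorphism UNIV UNIV (f w) (inv (f w))"
  shows "\<exists>h. homeomorphism UNIV UNIV (fiter f n \<omega>) h"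
proof (induction n)
  case 0
  show ?case using homeomorphism_ident[of UNIV] by (auto simp: id_def)
next
  case (Suc n)
  then obtain h where "homeomorphism UNIV UNIV (fiter f n \<omega>) h" by blast
  have "homeomorphism UNIV UNIV (fiter f (Suc n) \<omega>) (h \<circ> inv (f (\<omega> (int (Suc n)))))"
    unfolding fiter.simps by (rule homeomorphism_compose[OF _ assms]) fact
  then show ?case by blast
qed

lemma homeo_facts:
  assumes "homeomorphism UNIV UNIV g h"
  shows "inj g" "continuous_on UNIV g" "\<And>U. open U \<Longrightarrow> open (g ` U)"
    "\<And>U. g -` (g ` U) = U"
proof -
  have gh: "\<And>x. h (g x) = x" "\<And>x. g (h x) = x" and cg: "continuous_on UNIV g"
    and ch: "continuous_on UNIV h"
    using assms unfolding homeomorphism_def by auto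
  show ig: "inj g" by (rule injI) (metis gh(1))
  show "continuous_on UNIV g" by fact
  fix U
  have eq: "g ` U = h -` U"
  proof
    show "g ` U \<subseteq> h -` U" using gh(1) by auto
    show "h -` U \<subseteq> g ` U"
    proof
      fix x assume "x \<in> h -` U"
      then have "h x \<in> U" by simp
      then have "g (h x) \<in> g ` U" by (rule imageI)
      then show "x \<in> g ` U" using gh(2)[of x] by simp
    qed
  qed
  show "open U \<Longrightarrow> open (g ` U)" unfolding eq using ch open_vimage by blast
  show "g -` (g ` U) = U" by (rule inj_vimage_image_eq[OF ig])
qed

lemma avg_pick:
  fixes g :: "'a \<Rightarrow> real"
  assumes "finite I" "\<delta> > 0" "\<delta> \<le> sum g I"
  shows "\<exists>i\<in>I. \<delta> / (real (card I) + 1) \<le> g i"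
proof (rule ccontr)
  assume "\<not> ?thesis"
  then have le: "\<And>i. i \<in> I \<Longrightarrow> g i \<le> \<delta> / (real (card I) + 1)" by auto
  have "sum g I \<le> of_nat (card I) * (\<delta> / (real (card I) + 1))"
    by (rule sum_bounded_above) (rule le)
  also have "\<dots> = \<delta> * (real (card I) / (real (card I) + 1))" by simp
  also have "\<dots> < \<delta> * 1"
  proof (rule mult_strict_left_mono)
    show "real (card I) / (real (card I) + 1) < 1" by simp
  qed (rule assms(2))
  finally show False using assms(3) by simp
qed

theorem lemma4p3:
  fixes f :: "'w::polish_space \<Rightarrow> 'm::metric_space \<Rightarrow> 'm"
    and P :: "'w measure"
    and Leb :: "'m measure"
    and \<mu> :: "'m measure"
    and \<mu>star :: "('m \<times> (int \<Rightarrow> 'w)) measure"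
    and \<psi> :: "'m \<Rightarrow> real"
    and Theta0 :: "('m \<times> (int \<Rightarrow> 'w)) set"
    and \<beta>0 cc :: real
  assumes compactM: "compact (UNIV :: 'm set)"
    and P_prob: "prob_space P" and P_sets: "sets P = sets borel"
    and Leb_fin: "finite_measure Leb" and Leb_sets: "sets Leb = sets borel"
    and f_homeo: "\<And>w. homeomorphism UNIV UNIV (f w) (inv (f w))"
    and f_meas: "(\<lambda>p. f (snd p) (fst p)) \<in> borel_measurable (borel \<Otimes>\<^sub>M P)"
    and mu_prob: "prob_space \<mu>"
    and mu_stat: "\<And>A. A \<in> sets borel \<Longrightarrow>
                    emeasure \<mu> A = (\<integral>\<^sup>+ w. emeasure \<mu> (f w -` A) \<partial>P)"
    and psi_cont: "continuous_on UNIV \<psi>"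
    and mu_dens: "\<mu> = density Leb (\<lambda>x. ennreal (\<psi> x))"
    and mustar_prob: "prob_space \<mu>star" and mustar_sets: "sets \<mu>star = sets borel"
    and mustar_inv: "distr \<mu>star \<mu>star (skew f) = \<mu>star"
    and mustar_proj: "distr \<mu>star (\<mu> \<Otimes>\<^sub>M (\<Pi>\<^sub>M j\<in>(UNIV::nat set). P)) proj_plus
                        = \<mu> \<Otimes>\<^sub>M (\<Pi>\<^sub>M j\<in>(UNIV::nat set). P)"
    and beta_pos: "\<beta>0 > 0" and cc_gt: "cc > 1"
    and Theta0_compact: "compact Theta0"
    and Theta_big: "\<And>n. measure \<mu>star (Theta f Theta0 n) \<ge> 1 - \<beta>0"
    and small: "(cc + 1) * \<beta>0 < 1"
  shows "\<forall>\<epsilon>>0. \<exists>c>0. \<forall>\<omega>\<in>Gset f \<mu> Theta0 cc \<beta>0.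
           \<exists>pm p (ni :: nat \<Rightarrow> nat).
              \<psi> pm \<ge> \<beta>0 / measure Leb UNIV \<and>
              filterlim ni at_top sequentially \<and>
              (\<forall>i. measure (mu_n f \<mu> (ni i) \<omega>)
                      (Mset f Theta0 (ni i) \<omega> \<inter> ball p \<epsilon>
                        \<inter> fiter f (ni i) (shift_inv (ni i) \<omega>) ` ball pm \<epsilon>) \<ge> c)"
proof (intro allI impI)
  fix \<epsilon> :: real assume eps: "\<epsilon> > 0"
  define \<alpha> where "\<alpha> = \<beta>0 / measure Leb UNIV"
  define S where "S = {x. \<psi> x \<ge> \<alpha>}"
  define \<delta> where "\<delta> = 1 - (cc + 1) * \<beta>0"
  have delta_pos: "\<delta> > 0" using small by (simp add: \<delta>_def)
  interpret mu: prob_space \<mu> by (rule mu_prob)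
  interpret L: finite_measure Leb by (rule Leb_fin)
  have sets_mu: "sets \<mu> = sets borel" using mu_dens Leb_sets by simp
  have space_mu: "space \<mu> = UNIV" using sets_eq_imp_space_eq[OF sets_mu] by simp
  have S_closed: "closed S" unfolding S_def
    using closed_Collect_le[OF continuous_on_const psi_cont] by simp
  have S_compact: "compact S" using closed_Int_compact[OF S_closed compactM] by simp
  have psi_meas: "(\<lambda>x. ennreal (\<psi> x)) \<in> borel_measurable Leb"
    using borel_measurable_continuous_onI[OF psi_cont] Leb_sets
    by (metis measurable_cong_sets measurable_compose_rev measurable_ennreal)
  have cS_sets: "- S \<in> sets Leb" using S_closed Leb_sets by auto
  have "emeasure \<mu> (- S) = (\<integral>\<^sup>+ x. ennreal (\<psi> x) * indicator (- S) x \<partial>Leb)"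
    unfolding mu_dens by (rule emeasure_density[OF psi_meas cS_sets])
  also have "\<dots> \<le> (\<integral>\<^sup>+ x. ennreal \<alpha> * indicator (- S) x \<partial>Leb)"
    by (rule nn_integral_mono) (auto simp: S_def indicator_def intro: ennreal_leI)
  also have "\<dots> = ennreal \<alpha> * emeasure Leb (- S)"
    using cS_sets by (simp add: nn_integral_cmult_indicator)
  also have "\<dots> \<le> ennreal \<alpha> * emeasure Leb UNIV"
    by (intro mult_left_mono emeasure_mono) (auto simp: Leb_sets)
  also have "\<dots> = ennreal (\<alpha> * measure Leb UNIV)"
  proof -
    have sp: "space Leb = UNIV" using sets_eq_imp_space_eq[OF Leb_sets] by simp
    have a0: "\<alpha> \<ge> 0" using beta_pos by (simp add: \<alpha>_def)
    have e: "ennreal (\<alpha> * measure Leb UNIV) = ennreal \<alpha> * ennreal (measure Leb UNIV)"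
      by (rule ennreal_mult[OF a0 measure_nonneg])
    show ?thesis unfolding e using L.emeasure_eq_measure[of UNIV] sp by simp
  qed
  finally have e1: "emeasure \<mu> (- S) \<le> ennreal (\<alpha> * measure Leb UNIV)" .
  have "\<alpha> * measure Leb UNIV \<le> \<beta>0"
    using beta_pos by (cases "measure Leb UNIV = 0") (auto simp: \<alpha>_def)
  then have "emeasure \<mu> (- S) \<le> ennreal \<beta>0" using e1 ennreal_leI order_trans by blast
  then have mcS: "measure \<mu> (- S) \<le> \<beta>0"
    using beta_pos mu.emeasure_eq_measure[of "- S"] by simp
  have S_sets: "S \<in> sets \<mu>" using S_closed sets_mu by auto
  have mS: "measure \<mu> S \<ge> 1 - \<beta>0"
  proof -
    have "measure \<mu> (space \<mu> - (- S)) = 1 - measure \<mu> (- S)"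
      using mu.prob_compl[of "- S"] cS_sets sets_mu Leb_sets by simp
    moreover have "space \<mu> - (- S) = S" using space_mu by auto
    ultimately show ?thesis using mcS by simp
  qed
  have cov0: "(UNIV::'m set) \<subseteq> (\<Union>c\<in>UNIV. ball c \<epsilon>)" using eps by auto
  have cov1: "S \<subseteq> (\<Union>c\<in>S. ball c \<epsilon>)"
  proof
    fix x assume "x \<in> S" then show "x \<in> (\<Union>c\<in>S. ball c \<epsilon>)" using eps by (intro UN_I[of x]) auto
  qed
  obtain C where C: "finite C" "(UNIV::'m set) \<subseteq> (\<Union>p\<in>C. ball p \<epsilon>)"
    using compactE_image[of "UNIV::'m set" "UNIV::'m set" "\<lambda>c. ball c \<epsilon>", OF compactM _ cov0] by auto
  obtain D where "D \<subseteq> S" "finite D" "S \<subseteq> (\<Union>q\<in>D. ball q \<epsilon>)"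
    using compactE_image[of S S "\<lambda>c. ball c \<epsilon>", OF S_compact _ cov1] by auto
  note D = this
  define K where "K = C \<times> D"
  have finK: "finite K" using C D by (simp add: K_def)
  define c where "c = \<delta> / (real (card K) + 1)"
  have c_pos: "c > 0" using delta_pos by (simp add: c_def)
  have key: "\<exists>pq\<in>K. c \<le> measure (mu_n f \<mu> n \<omega>) (Mset f Theta0 n \<omega> \<inter> ball (fst pq) \<epsilon>
                  \<inter> fiter f n (shift_inv n \<omega>) ` ball (snd pq) \<epsilon>)"
    if G: "\<omega> \<in> Gn f \<mu> Theta0 cc \<beta>0 n" for \<omega> n
  proof -
    define g where "g = fiter f n (shift_inv n \<omega>)"
    obtain h where hh: "homeomorphism UNIV UNIV g h"
      using fiter_homeo[of f n "shift_inv n \<omega>", OF f_homeo] unfolding g_def by blast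
    note hf = homeo_facts[OF hh]
    have gmeas: "g \<in> measurable \<mu> \<mu>"
    proof -
      have gb: "g \<in> borel_measurable borel" by (rule borel_measurable_continuous_onI[OF hf(2)])
      have "measurable \<mu> \<mu> = measurable borel borel" by (rule measurable_cong_sets[OF sets_mu sets_mu])
      then show ?thesis using gb by simp
    qed
    define \<nu> where "\<nu> = mu_n f \<mu> n \<omega>"
    have nu_eq: "\<nu> = distr \<mu> \<mu> g" by (simp add: \<nu>_def mu_n_def g_def)
    interpret nu: prob_space \<nu> unfolding nu_eq by (rule mu.prob_space_distr[OF gmeas])
    have sets_nu: "sets \<nu> = sets borel" unfolding nu_eq using sets_mu by simp
    define Ms where "Ms = Mset f Theta0 n \<omega>"
    have M1: "measure \<nu> Ms \<ge> 1 - cc * \<beta>0" using G by (simp add: Gn_def \<nu>_def Ms_def)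
    have ccb: "cc * \<beta>0 < 1" using small beta_pos by (simp add: algebra_simps)
    have Ms_sets: "Ms \<in> sets \<nu>"
    proof (rule ccontr)
      assume "Ms \<notin> sets \<nu>"
      then have "measure \<nu> Ms = 0" by (rule measure_notin_sets)
      then show False using M1 ccb by linarith
    qed
    have gS_comp: "compact (g ` S)"
      by (rule compact_continuous_image[OF continuous_on_subset[OF hf(2)] S_compact]) simp
    have gSb: "g ` S \<in> sets borel" by (rule borel_closed[OF compact_imp_closed[OF gS_comp]])
    have gS_sets: "g ` S \<in> sets \<nu>" using gSb sets_nu by simp
    have gS_mu: "g ` S \<in> sets \<mu>" using gSb sets_mu by simp
    have "measure \<nu> (g ` S) = measure \<mu> (g -` (g ` S) \<inter> space \<mu>)"
      unfolding nu_eq by (rule measure_distr[OF gmeas gS_mu])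
    then have mgS: "measure \<nu> (g ` S) = measure \<mu> S"
      using hf(4)[of S] space_mu by simp
    have un: "measure \<nu> (Ms \<union> g ` S) = measure \<nu> Ms + measure \<nu> (g ` S) - measure \<nu> (Ms \<inter> g ` S)"
      by (rule measure_Un3) (use Ms_sets gS_sets nu.fmeasurable_eq_sets in auto)
    have "measure \<nu> (Ms \<union> g ` S) \<le> 1" by (rule nu.prob_le_1)
    moreover have "\<delta> = 1 - cc * \<beta>0 - \<beta>0" by (simp add: \<delta>_def algebra_simps)
    ultimately have big: "measure \<nu> (Ms \<inter> g ` S) \<ge> \<delta>"
      using un M1 mgS mS by linarith
    define E where "E pq = Ms \<inter> ball (fst pq) \<epsilon> \<inter> g ` ball (snd pq) \<epsilon>" for pq
    have E_sets: "E ` K \<subseteq> sets \<nu>"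
    proof
      fix X assume "X \<in> E ` K"
      then obtain pq where X: "X = E pq" by blast
      have "open (g ` ball (snd pq) \<epsilon>)" using hf(3) by simp
      then have o1: "g ` ball (snd pq) \<epsilon> \<in> sets \<nu>" using sets_nu borel_open by simp
      have o2: "ball (fst pq) \<epsilon> \<in> sets \<nu>" using sets_nu borel_open by simp
      show "X \<in> sets \<nu>" unfolding X E_def using Ms_sets o1 o2 by (intro sets.Int)
    qed
    have cov: "Ms \<inter> g ` S \<subseteq> (\<Union>pq\<in>K. E pq)"
    proof
      fix x assume x: "x \<in> Ms \<inter> g ` S"
      then obtain y where y: "y \<in> S" "x = g y" by blast
      obtain q where q: "q \<in> D" "y \<in> ball q \<epsilon>" using D(3) y by blast
      obtain p where p: "p \<in> C" "x \<in> ball p \<epsilon>" using C(2) by blast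
      have "(p, q) \<in> K" using p q by (simp add: K_def)
      moreover have "x \<in> E (p, q)" using x y q p by (auto simp: E_def)
      ultimately show "x \<in> (\<Union>pq\<in>K. E pq)" by blast
    qed
    have "\<delta> \<le> measure \<nu> (Ms \<inter> g ` S)" by (rule big)
    also have "\<dots> \<le> measure \<nu> (\<Union>pq\<in>K. E pq)"
      by (rule nu.finite_measure_mono[OF cov]) (use E_sets finK in auto)
    also have "\<dots> \<le> (\<Sum>pq\<in>K. measure \<nu> (E pq))"
      by (rule nu.finite_measure_subadditive_finite[OF finK E_sets])
    finally obtain pq where "pq \<in> K" "c \<le> measure \<nu> (E pq)"
      using avg_pick[OF finK delta_pos] unfolding c_def by blast
    then show ?thesis unfolding E_def \<nu>_def Ms_def g_def by blast
  qed
  show "\<exists>c>0. \<forall>\<omega>\<in>Gset f \<mu> Theta0 cc \<beta>0.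
           \<exists>pm p (ni :: nat \<Rightarrow> nat).
              \<psi> pm \<ge> \<beta>0 / measure Leb UNIV \<and>
              filterlim ni at_top sequentially \<and>
              (\<forall>i. measure (mu_n f \<mu> (ni i) \<omega>)
                      (Mset f Theta0 (ni i) \<omega> \<inter> ball p \<epsilon>
                        \<inter> fiter f (ni i) (shift_inv (ni i) \<omega>) ` ball pm \<epsilon>) \<ge> c)"
  proof (intro exI[of _ c] conjI ballI)
    show "c > 0" by (rule c_pos)
    fix \<omega> assume \<omega>: "\<omega> \<in> Gset f \<mu> Theta0 cc \<beta>0"
    define Ns where "Ns = {n. \<omega> \<in> Gn f \<mu> Theta0 cc \<beta>0 n}"
    have "\<forall>m. \<exists>n\<ge>m. n \<in> Ns"
    proof
      fix m :: nat
      have "max m 1 \<in> {1..}" by simp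
      then have "\<omega> \<in> (\<Union>n\<in>{max m 1..}. Gn f \<mu> Theta0 cc \<beta>0 n)"
        using \<omega> unfolding Gset_def by blast
      then show "\<exists>n\<ge>m. n \<in> Ns" by (auto simp: Ns_def)
    qed
    then have infN: "infinite Ns" using infinite_nat_iff_unbounded_le by blast
    define P where "P n pq = (pq \<in> K \<and> c \<le> measure (mu_n f \<mu> n \<omega>) (Mset f Theta0 n \<omega> \<inter> ball (fst pq) \<epsilon>
                  \<inter> fiter f n (shift_inv n \<omega>) ` ball (snd pq) \<epsilon>))" for n pq
    define sel where "sel n = (SOME pq. P n pq)" for n
    have selP: "P n (sel n)" if "n \<in> Ns" for n
    proof -
      have "\<exists>pq. P n pq" using key[of \<omega> n] that unfolding Ns_def P_def mem_Collect_eq by blast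
      then show ?thesis unfolding sel_def by (rule someI_ex)
    qed
    have "sel ` Ns \<subseteq> K" using selP by (auto simp: P_def)
    then have "finite (sel ` Ns)" using finK finite_subset by blast
    then obtain n0 where n0: "n0 \<in> Ns" "infinite {n \<in> Ns. sel n = sel n0}"
      using pigeonhole_infinite[OF infN] by blast
    define T where "T = {n \<in> Ns. sel n = sel n0}"
    define ni where "ni = enumerate T"
    have infT: "infinite T" using n0 by (simp add: T_def)
    have niT: "ni i \<in> T" for i unfolding ni_def by (rule enumerate_in_set[OF infT])
    have "strict_mono ni" unfolding ni_def strict_mono_def using enumerate_mono infT by blast
    then have lim: "filterlim ni at_top sequentially" by (rule filterlim_subseq)
    obtain p pm where pq: "sel n0 = (p, pm)" by fastforce
    have P0: "P n0 (p, pm)" using selP[OF n0(1)] pq by simp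
    have pmS: "pm \<in> S" using P0 D(1) by (auto simp: P_def K_def)
    show "\<exists>pm p (ni :: nat \<Rightarrow> nat).
              \<psi> pm \<ge> \<beta>0 / measure Leb UNIV \<and>
              filterlim ni at_top sequentially \<and>
              (\<forall>i. measure (mu_n f \<mu> (ni i) \<omega>)
                      (Mset f Theta0 (ni i) \<omega> \<inter> ball p \<epsilon>
                        \<inter> fiter f (ni i) (shift_inv (ni i) \<omega>) ` ball pm \<epsilon>) \<ge> c)"
    proof (rule exI[of _ pm], rule exI[of _ p], rule exI[of _ ni], intro conjI allI)
      show "\<psi> pm \<ge> \<beta>0 / measure Leb UNIV" using pmS by (simp add: S_def \<alpha>_def)
      show "filterlim ni at_top sequentially" by (rule lim)
      fix i
      have "ni i \<in> Ns" "sel (ni i) = (p, pm)" using niT[of i] pq by (auto simp: T_def)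
      then have "P (ni i) (p, pm)" using selP[of "ni i"] by simp
      then show "measure (mu_n f \<mu> (ni i) \<omega>)
                      (Mset f Theta0 (ni i) \<omega> \<inter> ball p \<epsilon>
                        \<inter> fiter f (ni i) (shift_inv (ni i) \<omega>) ` ball pm \<epsilon>) \<ge> c"
        by (simp add: P_def)
    qed
  qed
qed
end
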